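(* Let $\Theta=\{1,2\}$ and let $A$ be a finite set with $|A|=2$. Let $P$, $Q$, $R$ be experiments. Then $R$ is a Blackwell supremum of $P$ and $Q$ if and only if $\Lambda_R=\mathrm{co}(\Lambda_P\cup\Lambda_Q)$, where the feasible sets $\Lambda_P,\Lambda_Q,\Lambda_R$ are taken with respect to the action set $A$.
   Context: $\Theta$ is a finite set of states. A decision problem is a pair $(A,u)$ with $A$ a finite nonempty action set and $u:\Theta\times A\to\mathbb{R}$. An experiment is a map $P:\Theta\to\Delta(Y)$ with $Y$ a finite signal set. For a single experiment $P:\Theta\to\Delta(Y)$ its value in $(A,u)$ is $V(P;(A,u))=\max_{\sigma:Y\to\Delta(A)}\sum_{\theta}\sum_{y}P(y|\theta)\sum_a\sigma(a|y)u(\theta,a)$. An experiment $P$ is more informative than (Blackwell dominates) $Q$ if $V(P;(A,u))\ge V(Q;(A,u))$ for every decision problem $(A,u)$. An experiment $R$ is a Blackwell supremum of experiments $P_1,\dots,P_m$ if $R$ is more informative than every $P_j$, and every experiment $S$ that is more informative than all $P_j$ is also more informative than $R$. Given an action set $A$ and an experiment $P:\Theta\to\Delta(Y)$, its feasible set is $\Lambda_P=\{\lambda:\Theta\to\Delta(A)\mid \lambda(a|\theta)=\sum_y\sigma(a|y)P(y|\theta)\text{ for some }\sigma:Y\to\Delta(A)\}$, viewed as a subset of $\mathbb{R}^{\Theta\times A}$. *)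

theory Defs
  imports "HOL-Analysis.Analysis" "HOL-Library.Numeral_Type"
begin

text \<open>States form a finite type 's (its UNIV is Theta). Signal sets and the action
sets of decision problems are finite subsets of nat (every finite set is in bijection
with one). p is a probability distribution on the finite set Y.\<close>

definition is_dist :: "'b set \<Rightarrow> ('b \<Rightarrow> real) \<Rightarrow> bool" where
  "is_dist Y p \<longleftrightarrow> (\<forall>y\<in>Y. 0 \<le> p y) \<and> sum p Y = 1"

definition is_experiment :: "nat set \<Rightarrow> ('s::finite \<Rightarrow> nat \<Rightarrow> real) \<Rightarrow> bool" where
  "is_experiment Y P \<longleftrightarrow> finite Y \<and> (\<forall>\<theta>. is_dist Y (P \<theta>))"

definition strategy :: "nat set \<Rightarrow> 'b set \<Rightarrow> (nat \<Rightarrow> 'b \<Rightarrow> real) \<Rightarrow> bool" where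
  "strategy Y A \<sigma> \<longleftrightarrow> (\<forall>y\<in>Y. is_dist A (\<sigma> y))"

definition exp_value :: "nat set \<Rightarrow> ('s::finite \<Rightarrow> nat \<Rightarrow> real) \<Rightarrow> nat set \<Rightarrow> ('s \<Rightarrow> nat \<Rightarrow> real) \<Rightarrow> real" where
  "exp_value Y P A u = (SUP \<sigma>\<in>{\<sigma>. strategy Y A \<sigma>}.
      (\<Sum>\<theta>\<in>UNIV. \<Sum>y\<in>Y. P \<theta> y * (\<Sum>a\<in>A. \<sigma> y a * u \<theta> a)))"

definition more_informative :: "nat set \<Rightarrow> ('s::finite \<Rightarrow> nat \<Rightarrow> real) \<Rightarrow> nat set \<Rightarrow> ('s \<Rightarrow> nat \<Rightarrow> real) \<Rightarrow> bool" where
  "more_informative Y P Z Q \<longleftrightarrow>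
     (\<forall>(A::nat set) u. finite A \<and> A \<noteq> {} \<longrightarrow> exp_value Z Q A u \<le> exp_value Y P A u)"

definition blackwell_sup :: "nat set \<Rightarrow> ('s::finite \<Rightarrow> nat \<Rightarrow> real) \<Rightarrow> (nat set \<times> ('s \<Rightarrow> nat \<Rightarrow> real)) list \<Rightarrow> bool" where
  "blackwell_sup Y R Ps \<longleftrightarrow>
     (\<forall>(Z,Q)\<in>set Ps. more_informative Y R Z Q) \<and>
     (\<forall>W S. is_experiment W S \<and> (\<forall>(Z,Q)\<in>set Ps. more_informative W S Z Q)
            \<longrightarrow> more_informative W S Y R)"

definition feasible :: "nat set \<Rightarrow> ('s::finite \<Rightarrow> nat \<Rightarrow> real) \<Rightarrow> (real^('s \<times> 'a::finite)) set" where
  "feasible Y P = {(\<chi> i. \<Sum>y\<in>Y. \<sigma> y (snd i) * P (fst i) y) | \<sigma>. strategy Y (UNIV::'a set) \<sigma>}"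

end

theory Submission
  imports Defs
begin


definition GG :: "nat set \<Rightarrow> (2 \<Rightarrow> nat \<Rightarrow> real) \<Rightarrow> real \<Rightarrow> real \<Rightarrow> real" where
  "GG Y P e1 e2 = (\<Sum>y\<in>Y. max 0 (e1 * P 1 y + e2 * P 2 y))"

definition vv :: "nat set \<Rightarrow> (2 \<Rightarrow> nat \<Rightarrow> real) \<Rightarrow> nat set \<Rightarrow> (2 \<Rightarrow> nat \<Rightarrow> real) \<Rightarrow> real" where
  "vv Y P A u = (\<Sum>y\<in>Y. Max ((\<lambda>a. P 1 y * u 1 a + P 2 y * u 2 a) ` A))"

lemma two_ne: "(1::2) \<noteq> 2" by simp

lemma exp_fin: "is_experiment Y P \<Longrightarrow> finite Y"
  by (simp add: is_experiment_def)
lemma exp_nn: "is_experiment Y P \<Longrightarrow> y \<in> Y \<Longrightarrow> 0 \<le> P \<theta> y"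
  by (simp add: is_experiment_def is_dist_def)
lemma exp_sum: "is_experiment Y P \<Longrightarrow> sum (P \<theta>) Y = 1"
  by (simp add: is_experiment_def is_dist_def)

lemma ev:
  assumes E: "is_experiment Y P" and A: "finite A" "A \<noteq> {}"
  shows "exp_value Y P A u = vv Y P A u"
proof -
  define w where "w y a = P 1 y * u 1 a + P 2 y * u 2 a" for y a
  define F where "F \<sigma> = (\<Sum>\<theta>\<in>UNIV. \<Sum>y\<in>Y. P \<theta> y * (\<Sum>a\<in>A. \<sigma> y a * u \<theta> a))" for \<sigma> :: "nat \<Rightarrow> nat \<Rightarrow> real"
  have F: "F \<sigma> = (\<Sum>y\<in>Y. \<Sum>a\<in>A. \<sigma> y a * w y a)" for \<sigma>
    unfolding F_def sum_2 w_def
    by (simp add: sum.distrib[symmetric] sum_distrib_left distrib_left algebra_simps)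
  have le: "F \<sigma> \<le> vv Y P A u" if "strategy Y A \<sigma>" for \<sigma>
  proof -
    have "(\<Sum>a\<in>A. \<sigma> y a * w y a) \<le> Max (w y ` A)" if y: "y \<in> Y" for y
    proof -
      have d: "\<forall>a\<in>A. 0 \<le> \<sigma> y a" "sum (\<sigma> y) A = 1"
        using \<open>strategy Y A \<sigma>\<close> y by (auto simp: strategy_def is_dist_def)
      have "(\<Sum>a\<in>A. \<sigma> y a * w y a) \<le> (\<Sum>a\<in>A. \<sigma> y a * Max (w y ` A))"
        using d A by (intro sum_mono mult_left_mono) auto
      also have "\<dots> = Max (w y ` A)" using d by (simp add: sum_distrib_right[symmetric])
      finally show ?thesis .
    qed
    then show ?thesis unfolding F vv_def w_def by (intro sum_mono) auto
  qed
  define am where "am y = (SOME a. a \<in> A \<and> w y a = Max (w y ` A))" for y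
  have am: "am y \<in> A \<and> w y (am y) = Max (w y ` A)" for y
  proof -
    have "Max (w y ` A) \<in> w y ` A" using A by (intro Max_in) auto
    then obtain a where "a \<in> A \<and> w y a = Max (w y ` A)" by auto
    then show ?thesis unfolding am_def by (rule someI)
  qed
  define s where "s y a = (if a = am y then 1 else 0::real)" for y a
  have st: "strategy Y A s"
    unfolding strategy_def is_dist_def s_def using am A by (auto simp: sum.delta)
  have "(\<Sum>a\<in>A. s y a * w y a) = w y (am y)" for y
  proof -
    have "(\<Sum>a\<in>A. s y a * w y a) = (\<Sum>a\<in>A. if a = am y then w y a else 0)"
      by (intro sum.cong) (auto simp: s_def)
    also have "\<dots> = w y (am y)" using am[of y] A by (simp add: sum.delta)
    finally show ?thesis .
  qed
  then have "F s = vv Y P A u"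
    unfolding F vv_def using am by (simp add: w_def)
  then have "vv Y P A u \<in> F ` {\<sigma>. strategy Y A \<sigma>}" using st by force
  then show ?thesis
    unfolding exp_value_def F_def[symmetric]
    by (intro cSup_eq_maximum) (auto intro: le)
qed



lemma mi_G:
  assumes EP: "is_experiment Y P" and EQ: "is_experiment Z Q"
    and MI: "more_informative Y P Z Q"
  shows "GG Z Q e1 e2 \<le> GG Y P e1 e2"
proof -
  define u where "u \<theta> a = (if a = 0 then (if \<theta> = (1::2) then e1 else e2) else 0)" for \<theta> and a :: nat
  have "exp_value Z Q {0,1} u \<le> exp_value Y P {0,1} u"
    using MI unfolding more_informative_def by auto
  then have "vv Z Q {0,1} u \<le> vv Y P {0,1} u"
    using ev[OF EP] ev[OF EQ] by simp
  moreover have "vv X R {0,1} u = GG X R e1 e2" for X R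
    unfolding vv_def GG_def u_def by (intro sum.cong) (auto simp: max.commute mult.commute)
  ultimately show ?thesis by simp
qed

lemma G_upper:
  assumes E: "is_experiment Y P"
  shows "GG Y P e1 e2 \<le> max 0 e1 + max 0 e2"
proof -
  have "GG Y P e1 e2 \<le> (\<Sum>y\<in>Y. max 0 e1 * P 1 y + max 0 e2 * P 2 y)"
    unfolding GG_def
  proof (intro sum_mono)
    fix y assume y: "y \<in> Y"
    have a: "0 \<le> P 1 y" "0 \<le> P 2 y" using exp_nn[OF E y] by auto
    have "e1 * P 1 y \<le> max 0 e1 * P 1 y" "e2 * P 2 y \<le> max 0 e2 * P 2 y"
      using a by (auto intro: mult_right_mono)
    moreover have "0 \<le> max 0 e1 * P 1 y + max 0 e2 * P 2 y" using a by simp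
    ultimately show "max 0 (e1 * P 1 y + e2 * P 2 y) \<le> max 0 e1 * P 1 y + max 0 e2 * P 2 y"
      by simp
  qed
  also have "\<dots> = max 0 e1 + max 0 e2"
    by (simp add: sum.distrib sum_distrib_left[symmetric] exp_sum[OF E])
  finally show ?thesis .
qed

lemma G_lower:
  assumes E: "is_experiment Y P"
  shows "e1 + e2 \<le> GG Y P e1 e2" "0 \<le> GG Y P e1 e2"
proof -
  have "e1 + e2 = (\<Sum>y\<in>Y. e1 * P 1 y + e2 * P 2 y)"
    by (simp add: sum.distrib sum_distrib_left[symmetric] exp_sum[OF E])
  also have "\<dots> \<le> GG Y P e1 e2" unfolding GG_def by (intro sum_mono) simp
  finally show "e1 + e2 \<le> GG Y P e1 e2" .
  show "0 \<le> GG Y P e1 e2" unfolding GG_def by (intro sum_nonneg) simp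
qed

lemma G_neg:
  assumes E: "is_experiment Y P"
  shows "GG Y P e1 e2 = GG Y P (-e1) (-e2) + e1 + e2"
proof -
  have "GG Y P e1 e2 = (\<Sum>y\<in>Y. max 0 (-e1 * P 1 y + -e2 * P 2 y) + (e1 * P 1 y + e2 * P 2 y))"
    unfolding GG_def by (intro sum.cong) auto
  also have "\<dots> = GG Y P (-e1) (-e2) + e1 + e2"
    unfolding GG_def
    by (simp add: sum.distrib sum_distrib_left[symmetric] exp_sum[OF E])
  finally show ?thesis .
qed

lemma G_scale:
  assumes "0 \<le> k"
  shows "GG Y P (k * e1) (k * e2) = k * GG Y P e1 e2"
  unfolding GG_def sum_distrib_left
proof (intro sum.cong refl)
  fix y
  have "k * e1 * P 1 y + k * e2 * P 2 y = k * (e1 * P 1 y + e2 * P 2 y)" by (simp add: algebra_simps)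
  then show "max 0 (k * e1 * P 1 y + k * e2 * P 2 y) = k * max 0 (e1 * P 1 y + e2 * P 2 y)"
    using assms by (simp add: max_mult_distrib_left)
qed



lemma phi_max:
  assumes "finite A" "A \<noteq> {}"
  shows "\<exists>a\<in>A. Max ((\<lambda>a. \<alpha> a + \<beta> a * t) ` A) = \<alpha> a + \<beta> a * (t::real)"
proof -
  have "Max ((\<lambda>a. \<alpha> a + \<beta> a * t) ` A) \<in> (\<lambda>a. \<alpha> a + \<beta> a * t) ` A"
    using assms by (intro Max_in) auto
  then show ?thesis by auto
qed

lemma phi_ge:
  assumes "finite A" "a \<in> A"
  shows "\<alpha> a + \<beta> a * (t::real) \<le> Max ((\<lambda>a. \<alpha> a + \<beta> a * t) ` A)"
  using assms by (intro Max_ge) auto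

lemma interp:
  fixes \<alpha> \<beta> :: "nat \<Rightarrow> real" and A :: "nat set" and T :: "real set"
  assumes A: "finite A" "A \<noteq> {}" and T: "finite T"
  shows "T \<noteq> {} \<longrightarrow> (\<exists>a b (n::nat) c \<tau>. (\<forall>k<n. 0 \<le> c k \<and> \<tau> k \<le> Max T) \<and>
     (\<forall>t\<in>T. Max ((\<lambda>a. \<alpha> a + \<beta> a * t) ` A) = a + b*t + (\<Sum>k<n. c k * max 0 (t - \<tau> k))) \<and>
     (\<exists>a'\<in>A. b + (\<Sum>k<n. c k) \<le> \<beta> a' \<and> Max ((\<lambda>a. \<alpha> a + \<beta> a * Max T) ` A) = \<alpha> a' + \<beta> a' * Max T))"
  using T
proof (induction T rule: finite_linorder_max_induct)
  case empty
  then show ?case by simp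
next
  case (insert M T0)
  define \<phi> where "\<phi> t = Max ((\<lambda>a. \<alpha> a + \<beta> a * t) ` A)" for t
  have phge: "\<alpha> a + \<beta> a * t \<le> \<phi> t" if "a \<in> A" for a t
    unfolding \<phi>_def using phi_ge[OF A(1) that] .
  obtain a'' where a'': "a'' \<in> A" "\<phi> M = \<alpha> a'' + \<beta> a'' * M"
    using phi_max[OF A] unfolding \<phi>_def by blast
  have MaxI: "Max (insert M T0) = M"
    using insert by (intro Max_eqI) auto
  show ?case
  proof (cases "T0 = {}")
    case True
    have "\<forall>t\<in>insert M T0. Max ((\<lambda>a. \<alpha> a + \<beta> a * t) ` A) = \<alpha> a'' + \<beta> a''*t + (\<Sum>k<0. (\<lambda>_. 0) k * max 0 (t - (\<lambda>_. 0) k))"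
      using a'' True unfolding \<phi>_def by auto
    moreover have "\<exists>a'\<in>A. \<beta> a'' + (\<Sum>k<0. (\<lambda>_. 0::real) k) \<le> \<beta> a' \<and> Max ((\<lambda>a. \<alpha> a + \<beta> a * Max (insert M T0)) ` A) = \<alpha> a' + \<beta> a' * Max (insert M T0)"
      using a'' MaxI unfolding \<phi>_def by auto
    ultimately show ?thesis
      apply (intro impI)
      apply (rule_tac x="\<alpha> a''" in exI)
      apply (rule_tac x="\<beta> a''" in exI)
      apply (rule_tac x="0::nat" in exI)
      apply (rule_tac x="\<lambda>_::nat. 0::real" in exI)
      apply (rule_tac x="\<lambda>_::nat. 0::real" in exI)
      by simp
  next
    case False
    then obtain a b and n :: nat and c \<tau> where
      inv1: "\<forall>k<n. 0 \<le> c k \<and> \<tau> k \<le> Max T0" and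
      inv2: "\<forall>t\<in>T0. \<phi> t = a + b*t + (\<Sum>k<n. c k * max 0 (t - \<tau> k))" and
      inv3: "\<exists>a'\<in>A. b + (\<Sum>k<n. c k) \<le> \<beta> a' \<and> \<phi> (Max T0) = \<alpha> a' + \<beta> a' * Max T0"
      using insert.IH unfolding \<phi>_def by blast
    define M0 where "M0 = Max T0"
    have M0: "M0 \<in> T0" "M0 < M" "\<forall>t\<in>T0. t \<le> M0"
      using False insert.hyps unfolding M0_def by auto
    define s where "s = b + (\<Sum>k<n. c k)"
    define \<sigma> where "\<sigma> = (\<phi> M - \<phi> M0) / (M - M0)"
    obtain a' where a': "a' \<in> A" "s \<le> \<beta> a'" "\<phi> M0 = \<alpha> a' + \<beta> a' * M0"
      using inv3 unfolding s_def M0_def by blast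
    have "\<phi> M - \<phi> M0 \<ge> \<beta> a' * (M - M0)"
      using phge[OF a'(1), of M] a'(3) by (simp add: algebra_simps)
    moreover have "s * (M - M0) \<le> \<beta> a' * (M - M0)" using a'(2) M0(2) by (intro mult_right_mono) auto
    ultimately have "s * (M - M0) \<le> \<phi> M - \<phi> M0" by linarith
    then have s\<sigma>: "s \<le> \<sigma>" using M0(2) unfolding \<sigma>_def
      by (simp add: le_divide_eq)
    have "\<phi> M - \<phi> M0 \<le> \<beta> a'' * (M - M0)"
      using phge[OF a''(1), of M0] a''(2) by (simp add: algebra_simps)
    then have \<sigma>b: "\<sigma> \<le> \<beta> a''" using M0(2) unfolding \<sigma>_def
      by (simp add: divide_le_eq)
    have \<sigma>eq: "\<phi> M = \<phi> M0 + \<sigma> * (M - M0)" using M0(2) unfolding \<sigma>_def by simp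
    define c' where "c' = c(n := \<sigma> - s)"
    define \<tau>' where "\<tau>' = \<tau>(n := M0)"
    have sumc: "(\<Sum>k<n. c' k * g k) = (\<Sum>k<n. c k * g k)" for g
      unfolding c'_def by (intro sum.cong) auto
    have sumt: "(\<Sum>k<n. c' k * max 0 (t - \<tau>' k)) = (\<Sum>k<n. c k * max 0 (t - \<tau> k))" for t
      unfolding c'_def \<tau>'_def by (intro sum.cong) auto
    have lin: "(\<Sum>k<n. c k * max 0 (t - \<tau> k)) = (\<Sum>k<n. c k * (t - \<tau> k))" if "M0 \<le> t" for t
      using inv1 that unfolding M0_def by (intro sum.cong) auto
    have repM: "a + b*M + (\<Sum>k<n. c k * max 0 (M - \<tau> k)) = \<phi> M0 + s * (M - M0)"
    proof -
      have "\<phi> M0 = a + b*M0 + (\<Sum>k<n. c k * (M0 - \<tau> k))"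
        using inv2 M0(1) lin[of M0] by simp
      moreover have "(\<Sum>k<n. c k * (M - \<tau> k)) = (\<Sum>k<n. c k * (M0 - \<tau> k) + c k * (M - M0))"
        by (intro sum.cong) (auto simp: algebra_simps)
      then have "(\<Sum>k<n. c k * (M - \<tau> k)) = (\<Sum>k<n. c k * (M0 - \<tau> k)) + (\<Sum>k<n. c k) * (M - M0)"
        by (simp add: sum.distrib sum_distrib_right)
      ultimately show ?thesis using lin[of M] M0(2) unfolding s_def by (simp add: algebra_simps)
    qed
    show ?thesis
    proof (intro impI exI conjI)
      show "\<forall>k<Suc n. 0 \<le> c' k \<and> \<tau>' k \<le> Max (insert M T0)"
        using inv1 s\<sigma> M0 MaxI unfolding c'_def \<tau>'_def M0_def[symmetric]
        by (auto simp: less_Suc_eq)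
      show "\<forall>t\<in>insert M T0. Max ((\<lambda>a. \<alpha> a + \<beta> a * t) ` A) =
             a + b * t + (\<Sum>k<Suc n. c' k * max 0 (t - \<tau>' k))"
      proof
        fix t assume t: "t \<in> insert M T0"
        show "Max ((\<lambda>a. \<alpha> a + \<beta> a * t) ` A) = a + b * t + (\<Sum>k<Suc n. c' k * max 0 (t - \<tau>' k))"
        proof (cases "t = M")
          case True
          have "a + b * M + (\<Sum>k<Suc n. c' k * max 0 (M - \<tau>' k))
              = \<phi> M0 + s * (M - M0) + (\<sigma> - s) * (M - M0)"
            using repM sumt[of M] M0(2) by (simp add: c'_def \<tau>'_def)
          also have "\<dots> = \<phi> M" using \<sigma>eq by (simp add: algebra_simps)
          finally show ?thesis using True unfolding \<phi>_def by simp
        next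
          case False
          then have "t \<in> T0" using t by simp
          then have "t \<le> M0" using M0 by auto
          then show ?thesis using inv2 \<open>t \<in> T0\<close> sumt[of t] unfolding \<phi>_def
            by (simp add: c'_def \<tau>'_def)
        qed
      qed
      show "\<exists>a'\<in>A. b + (\<Sum>k<Suc n. c' k) \<le> \<beta> a' \<and>
        Max ((\<lambda>a. \<alpha> a + \<beta> a * Max (insert M T0)) ` A) = \<alpha> a' + \<beta> a' * Max (insert M T0)"
      proof (intro bexI conjI)
        have "(\<Sum>k<Suc n. c' k) = (\<Sum>k<n. c k) + (\<sigma> - s)"
          using sumc[of "\<lambda>_. 1"] by (simp add: c'_def)
        then have "b + (\<Sum>k<Suc n. c' k) = s + (\<sigma> - s)" by (simp add: s_def)
        then show "b + (\<Sum>k<Suc n. c' k) \<le> \<beta> a''" using \<sigma>b by simp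
        show "Max ((\<lambda>a. \<alpha> a + \<beta> a * Max (insert M T0)) ` A) = \<alpha> a'' + \<beta> a'' * Max (insert M T0)"
          using a''(2) MaxI unfolding \<phi>_def by simp
      qed (rule a''(1))
    qed
  qed
qed



lemma Max_scale:
  assumes "finite A" "A \<noteq> {}" "0 \<le> (m::real)"
  shows "Max ((\<lambda>a. m * g a) ` A) = m * Max (g ` A)"
proof -
  have "Max (g ` A) \<in> g ` A" using assms by (intro Max_in) auto
  then obtain a0 where a0: "a0 \<in> A" "g a0 = Max (g ` A)" by auto
  have "g a \<le> g a0" if "a \<in> A" for a using a0 that assms by auto
  have mem: "m * Max (g ` A) \<in> (\<lambda>a. m * g a) ` A" using a0 by (metis image_eqI)
  show ?thesis using a0 assms mem \<open>\<And>a. a \<in> A \<Longrightarrow> g a \<le> g a0\<close>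
    by (intro Max_eqI) (auto intro: mult_left_mono)
qed

lemma signal_rep:
  fixes u :: "2 \<Rightarrow> nat \<Rightarrow> real"
  assumes A: "finite A" "A \<noteq> {}"
    and x: "0 \<le> x1" "0 \<le> x2"
    and rep: "x1 + x2 \<noteq> 0 \<Longrightarrow> Max ((\<lambda>a. u 1 a + (u 2 a - u 1 a) * (x2/(x1+x2))) ` A)
           = a + b*(x2/(x1+x2)) + (\<Sum>k<n. c k * max 0 (x2/(x1+x2) - \<tau> k))"
    and c: "\<forall>k<n. 0 \<le> c k"
  shows "Max ((\<lambda>a. x1 * u 1 a + x2 * u 2 a) ` A) =
     a*x1 + (a+b)*x2 + (\<Sum>k<n. max 0 ((- c k * \<tau> k) * x1 + (c k - c k * \<tau> k) * x2))"
proof (cases "x1 + x2 = 0")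
  case True
  then have "x1 = 0" "x2 = 0" using x by auto
  moreover have "(\<lambda>a. 0 * u 1 a + 0 * u 2 a) ` A = {0::real}" using A by auto
  ultimately show ?thesis by simp
next
  case False
  define m where "m = x1 + x2"
  define t where "t = x2 / m"
  have m: "0 < m" using False x unfolding m_def by auto
  have xt: "x2 = m * t" "x1 = m - m * t" using m unfolding t_def m_def by auto
  have "Max ((\<lambda>a. x1 * u 1 a + x2 * u 2 a) ` A) = Max ((\<lambda>a. m * (u 1 a + (u 2 a - u 1 a) * t)) ` A)"
    by (intro arg_cong[where f=Max] image_cong refl) (simp add: xt algebra_simps)
  also have "\<dots> = m * Max ((\<lambda>a. u 1 a + (u 2 a - u 1 a) * t) ` A)"
    using Max_scale[OF A, of m] m by simp
  also have "\<dots> = m * (a + b*t + (\<Sum>k<n. c k * max 0 (t - \<tau> k)))"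
    using rep False unfolding t_def m_def by simp
  also have "\<dots> = a*m + b*(m*t) + (\<Sum>k<n. max 0 ((- c k * \<tau> k) * (m - m*t) + (c k - c k * \<tau> k) * (m*t)))"
  proof -
    have "m * (c k * max 0 (t - \<tau> k)) = max 0 ((- c k * \<tau> k) * (m - m*t) + (c k - c k * \<tau> k) * (m*t))"
      if "k < n" for k
    proof -
      have eq: "(- c k * \<tau> k) * (m - m*t) + (c k - c k * \<tau> k) * (m*t) = (m * c k) * (t - \<tau> k)"
        by (simp add: algebra_simps)
      have mc: "0 \<le> m * c k" using m c that by simp
      have "m * (c k * max 0 (t - \<tau> k)) = (m * c k) * max 0 (t - \<tau> k)" by simp
      also have "\<dots> = max 0 ((m * c k) * (t - \<tau> k))" using mc by (simp add: max_mult_distrib_left)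
      finally show ?thesis using eq by simp
    qed
    then show ?thesis by (simp add: distrib_left sum_distrib_left algebra_simps)
  qed
  finally show ?thesis unfolding xt[symmetric] by (simp add: m_def algebra_simps)
qed

lemma dl:
  assumes EP: "is_experiment Y P" and EQ: "is_experiment Z Q"
    and G: "\<And>e1 e2. GG Z Q e1 e2 \<le> GG Y P e1 e2"
  shows "more_informative Y P Z Q"
  unfolding more_informative_def
proof (intro allI impI, elim conjE)
  fix A :: "nat set" and u :: "2 \<Rightarrow> nat \<Rightarrow> real"
  assume A: "finite A" "A \<noteq> {}"
  define T where "T = insert 0 (((\<lambda>y. P 2 y/(P 1 y + P 2 y)) ` Y) \<union> ((\<lambda>y. Q 2 y/(Q 1 y + Q 2 y)) ` Z))"
  have T: "finite T" "T \<noteq> {}" using exp_fin[OF EP] exp_fin[OF EQ] unfolding T_def by auto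
  obtain a b and n :: nat and c \<tau> where
    i1: "\<forall>k<n. 0 \<le> c k \<and> \<tau> k \<le> Max T" and
    i2: "\<forall>t\<in>T. Max ((\<lambda>a. u 1 a + (u 2 a - u 1 a) * t) ` A) = a + b*t + (\<Sum>k<n. c k * max 0 (t - \<tau> k))"
    using interp[OF A T(1), of "\<lambda>a. u 1 a" "\<lambda>a. u 2 a - u 1 a"] T(2) by blast
  have rep: "vv X R A u = a + (a+b) + (\<Sum>k<n. GG X R (- c k * \<tau> k) (c k - c k * \<tau> k))"
    if E: "is_experiment X R" and XT: "\<forall>y\<in>X. R 2 y/(R 1 y + R 2 y) \<in> T" for X R
  proof -
    have "vv X R A u = (\<Sum>y\<in>X. a * R 1 y + (a+b) * R 2 y + (\<Sum>k<n. max 0 ((- c k * \<tau> k) * R 1 y + (c k - c k * \<tau> k) * R 2 y)))"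
      unfolding vv_def
    proof (intro sum.cong refl)
      fix y assume y: "y \<in> X"
      show "Max ((\<lambda>a. R 1 y * u 1 a + R 2 y * u 2 a) ` A) =
        a * R 1 y + (a+b) * R 2 y + (\<Sum>k<n. max 0 ((- c k * \<tau> k) * R 1 y + (c k - c k * \<tau> k) * R 2 y))"
      proof -
        have "R 2 y/(R 1 y + R 2 y) \<in> T" using XT y by auto
        then have r: "Max ((\<lambda>a. u 1 a + (u 2 a - u 1 a) * (R 2 y/(R 1 y + R 2 y))) ` A) =
           a + b*(R 2 y/(R 1 y + R 2 y)) + (\<Sum>k<n. c k * max 0 (R 2 y/(R 1 y + R 2 y) - \<tau> k))"
          using i2 by blast
        have c: "\<forall>k<n. 0 \<le> c k" using i1 by auto
        show ?thesis
          by (rule signal_rep[OF A exp_nn[OF E y, of 1] exp_nn[OF E y, of 2] r c])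
      qed
    qed
    also have "\<dots> = a * (\<Sum>y\<in>X. R 1 y) + (a+b) * (\<Sum>y\<in>X. R 2 y) + (\<Sum>k<n. GG X R (- c k * \<tau> k) (c k - c k * \<tau> k))"
      unfolding GG_def by (simp add: sum.distrib sum_distrib_left sum.swap[of _ X])
    finally show ?thesis using exp_sum[OF E] by simp
  qed
  have "vv Z Q A u \<le> vv Y P A u"
    using rep[OF EP] rep[OF EQ] G unfolding T_def by (auto intro: sum_mono)
  then show "exp_value Z Q A u \<le> exp_value Y P A u"
    using ev[OF EP A] ev[OF EQ A] by simp
qed

lemma mi_iff:
  assumes EP: "is_experiment Y P" and EQ: "is_experiment Z Q"
  shows "more_informative Y P Z Q \<longleftrightarrow> (\<forall>e1 e2. GG Z Q e1 e2 \<le> GG Y P e1 e2)"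
  using dl[OF EP EQ] mi_G[OF EP EQ] by blast



definition HH :: "nat set \<Rightarrow> (2 \<Rightarrow> nat \<Rightarrow> real) \<Rightarrow> real \<Rightarrow> real" where
  "HH Y P t = GG Y P (-t) (1 - t)"

lemma max0_conv:
  assumes "0 \<le> l" "l \<le> (1::real)"
  shows "max 0 ((1-l)*x + l*y) \<le> (1-l) * max 0 x + l * max 0 y"
proof -
  have "(1-l)*x \<le> (1-l) * max 0 x" "l*y \<le> l * max 0 y" using assms by (auto intro: mult_left_mono)
  moreover have "0 \<le> (1-l) * max 0 x + l * max 0 y" using assms by simp
  ultimately show ?thesis by simp
qed

lemma H_conv:
  assumes "0 \<le> l" "l \<le> (1::real)"
  shows "HH X R ((1-l)*a + l*b) \<le> (1-l) * HH X R a + l * HH X R b"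
  unfolding HH_def GG_def sum_distrib_left sum.distrib[symmetric]
proof (intro sum_mono)
  fix y
  have "- ((1 - l) * a + l * b) * R 1 y + (1 - ((1 - l) * a + l * b)) * R 2 y
     = (1-l) * (- a * R 1 y + (1 - a) * R 2 y) + l * (- b * R 1 y + (1 - b) * R 2 y)"
    by (simp add: algebra_simps)
  then show "max 0 (- ((1 - l) * a + l * b) * R 1 y + (1 - ((1 - l) * a + l * b)) * R 2 y)
         \<le> (1 - l) * max 0 (- a * R 1 y + (1 - a) * R 2 y) + l * max 0 (- b * R 1 y + (1 - b) * R 2 y)"
    using max0_conv[OF assms] by simp
qed

lemma H0: "is_experiment X R \<Longrightarrow> HH X R 0 = 1"
  unfolding HH_def GG_def using exp_sum[of X R 2] exp_nn[of X R]
  by (metis (no_types, lifting) add_0 diff_zero max.absorb2 minus_zero mult_1 mult_zero_left sum.cong)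

lemma H1: "is_experiment X R \<Longrightarrow> HH X R 1 = 0"
  unfolding HH_def GG_def using exp_nn[of X R]
  by (intro sum.neutral) auto

lemma G_from_H:
  assumes EX: "is_experiment X R" and ES: "is_experiment W S"
    and H: "\<And>t. 0 \<le> t \<Longrightarrow> t \<le> 1 \<Longrightarrow> HH X R t \<le> HH W S t"
  shows "GG X R e1 e2 \<le> GG W S e1 e2"
proof -
  have mixed: "GG X R f1 f2 \<le> GG W S f1 f2" if "f1 < 0" "0 < f2" for f1 f2
  proof -
    define k where "k = f2 - f1"
    define t where "t = - f1 / k"
    have k: "0 < k" using that unfolding k_def by simp
    have ft: "f1 = k * (-t)" "f2 = k * (1 - t)" using k unfolding t_def k_def by (auto simp: field_simps)
    have t: "0 \<le> t" "t \<le> 1" using that k unfolding t_def k_def by (auto simp: field_simps)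
    have "GG X R f1 f2 = k * HH X R t" unfolding ft HH_def using G_scale[of k X R "-t" "1-t"] G_scale[of k W S "-t" "1-t"] k by simp
    also have "\<dots> \<le> k * HH W S t" using H[OF t] k by simp
    also have "\<dots> = GG W S f1 f2" unfolding ft HH_def using G_scale[of k X R "-t" "1-t"] G_scale[of k W S "-t" "1-t"] k by simp
    finally show ?thesis .
  qed
  consider "0 \<le> e1" "0 \<le> e2" | "e1 \<le> 0" "e2 \<le> 0" | "e1 < 0" "0 < e2" | "0 < e1" "e2 < 0" by linarith
  then show ?thesis
  proof cases
    case 1
    then show ?thesis using G_upper[OF EX, of e1 e2] G_lower[OF ES, of e1 e2] by simp
  next
    case 2
    then show ?thesis using G_upper[OF EX, of e1 e2] G_lower[OF ES, of e1 e2] by simp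
  next
    case 3
    then show ?thesis by (rule mixed)
  next
    case 4
    then show ?thesis using mixed[of "-e1" "-e2"] G_neg[OF EX, of e1 e2] G_neg[OF ES, of e1 e2] by simp
  qed
qed



lemma construct:
  assumes t0: "0 < t0" "t0 < 1" and v: "1 - 2*t0 \<le> v" "0 \<le> v" "v \<le> 1 - t0"
  shows "\<exists>W S. is_experiment W S \<and> HH W S t0 = v \<and>
    (\<forall>X R. is_experiment X R \<and> HH X R t0 \<le> v \<longrightarrow> (\<forall>e1 e2. GG X R e1 e2 \<le> GG W S e1 e2))"
proof -
  define g where "g = v / (1 - t0)"
  define b2 where "b2 = 1 - g"
  define b1 where "b1 = (1 - t0) * b2 / t0"
  define al where "al = 1 - b1"
  have g: "0 \<le> g" "g \<le> 1" "v = (1 - t0) * g" using t0 v unfolding g_def by (auto simp: field_simps)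
  have b2: "0 \<le> b2" "b2 \<le> 1" using g unfolding b2_def by auto
  have b1t: "t0 * b1 = (1 - t0) * b2" using t0 unfolding b1_def by simp
  have b1: "0 \<le> b1" using t0 b2 unfolding b1_def by simp
  have "(1 - t0) * b2 \<le> t0" using g v t0 unfolding b2_def by (simp add: algebra_simps)
  then have "t0 * b1 \<le> t0 * 1" using b1t by simp
  then have b1': "b1 \<le> 1" using t0 by simp
  have kink: "b2 = t0 * (b1 + b2)" using b1t by (simp add: algebra_simps)
  define W where "W = {0,1,2::nat}"
  define S :: "2 \<Rightarrow> nat \<Rightarrow> real" where "S \<theta> y = (if \<theta> = (1::2) then (if y = 0 then al else if y = 1 then b1 else 0)
                      else (if y = 0 then 0 else if y = 1 then b2 else g))" for \<theta> y
  have S1: "S 1 0 = al" "S 1 1 = b1" "S 1 2 = 0" unfolding S_def by auto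
  have S2: "S 2 0 = 0" "S 2 1 = b2" "S 2 2 = g" unfolding S_def by auto
  have ES: "is_experiment W S"
    unfolding is_experiment_def is_dist_def W_def
  proof (intro conjI allI)
    fix \<theta> :: 2
    show "\<forall>y\<in>{0, 1, 2}. 0 \<le> S \<theta> y"
      using g b1 b1' b2 unfolding S_def al_def by auto
    show "sum (S \<theta>) {0, 1, 2} = 1"
      unfolding S_def al_def b2_def by auto
  qed simp
  have GS: "GG W S e1 e2 = max 0 (e1 * al) + max 0 (e1 * b1 + e2 * b2) + max 0 (e2 * g)" for e1 e2
    unfolding GG_def W_def using S1 S2 by simp
  have HS: "HH W S t = max 0 ((t0 - t) * (b1 + b2)) + (1 - t) * g" if "t \<le> 1" "0 \<le> t" for t
  proof -
    have "- t * b1 + (1 - t) * b2 = (t0 - t) * (b1 + b2)" using kink by (simp add: algebra_simps)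
    moreover have "max 0 (- t * al) = 0" using b1' that unfolding al_def
      by (simp add: mult_nonneg_nonneg)
    moreover have "max 0 ((1 - t) * g) = (1 - t) * g" using g that by simp
    ultimately show ?thesis unfolding HH_def GS by simp
  qed
  have HS0: "HH W S t0 = v" using HS[of t0] t0 g by simp
  have dom: "GG X R e1 e2 \<le> GG W S e1 e2" if EX: "is_experiment X R" and hv: "HH X R t0 \<le> v" for X R e1 e2
  proof (rule G_from_H[OF EX ES])
    fix t :: real assume t: "0 \<le> t" "t \<le> 1"
    show "HH X R t \<le> HH W S t"
    proof (cases "t \<le> t0")
      case True
      define l where "l = t / t0"
      have l: "0 \<le> l" "l \<le> 1" "t = (1 - l) * 0 + l * t0" using t t0 True unfolding l_def by (auto simp: field_simps)
      have "HH X R t \<le> (1 - l) * HH X R 0 + l * HH X R t0" using H_conv[OF l(1,2), of X R 0 t0] l(3) by simp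
      also have "\<dots> \<le> (1 - l) * 1 + l * v" using H0[OF EX] hv l by (simp add: mult_left_mono)
      also have "\<dots> = HH W S t"
      proof -
        have "HH W S t = (t0 - t) * (b1 + b2) + (1 - t) * g" using HS[OF t(2,1)] True b1 b2 by simp
        also have "\<dots> = (1 - l) * (t0 * (b1 + b2)) + (1 - t) * g" using l(3) by (simp add: algebra_simps)
        also have "\<dots> = (1 - l) * b2 + (1 - l * t0) * g" using l(3) kink by simp
        also have "\<dots> = (1 - l) * 1 + l * v" unfolding g(3) b2_def by (simp add: algebra_simps)
        finally show ?thesis by simp
      qed
      finally show ?thesis .
    next
      case False
      define l where "l = (t - t0) / (1 - t0)"
      have lt: "l * (1 - t0) = t - t0" using t0 unfolding l_def by simp
      have l: "0 \<le> l" "l \<le> 1" using t t0 False unfolding l_def by (auto simp: field_simps)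
      have l3: "t = (1 - l) * t0 + l * 1" using lt by (simp add: algebra_simps)
      note l = l l3
      have "HH X R t \<le> (1 - l) * HH X R t0 + l * HH X R 1" using H_conv[OF l(1,2), of X R t0 1] l(3) by simp
      also have "\<dots> \<le> (1 - l) * v" using H1[OF EX] hv l by (simp add: mult_left_mono)
      also have "\<dots> = HH W S t"
      proof -
        have "max 0 ((t0 - t) * (b1 + b2)) = 0" using False b1 b2
          by (simp add: mult_nonpos_nonneg)
        then have "HH W S t = (1 - t) * g" using HS[OF t(2,1)] by simp
        also have "\<dots> = (1 - l) * v"
        proof -
          have e: "1 - t = (1 - l) * (1 - t0)" using l(3) by (simp add: algebra_simps)
          show ?thesis unfolding e g(3) by simp
        qed
        finally show ?thesis by simp
      qed
      finally show ?thesis .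
    qed
  qed
  show ?thesis using ES HS0 dom by blast
qed



lemma H_bounds:
  assumes E: "is_experiment X R"
  shows "1 - 2*t \<le> HH X R t" "0 \<le> HH X R t" "0 \<le> t \<Longrightarrow> t \<le> 1 \<Longrightarrow> HH X R t \<le> 1 - t"
  using G_lower[OF E, of "-t" "1-t"] G_upper[OF E, of "-t" "1-t"] unfolding HH_def by auto

lemma witness:
  assumes EP: "is_experiment Y P" and EQ: "is_experiment Z Q"
  shows "\<exists>W S. is_experiment W S \<and> (\<forall>e1 e2. GG Y P e1 e2 \<le> GG W S e1 e2) \<and>
     (\<forall>e1 e2. GG Z Q e1 e2 \<le> GG W S e1 e2) \<and> GG W S d1 d2 \<le> max (GG Y P d1 d2) (GG Z Q d1 d2)"
proof -
  have mixed: "\<exists>W S. is_experiment W S \<and> (\<forall>e1 e2. GG Y P e1 e2 \<le> GG W S e1 e2) \<and>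
     (\<forall>e1 e2. GG Z Q e1 e2 \<le> GG W S e1 e2) \<and> GG W S f1 f2 = max (GG Y P f1 f2) (GG Z Q f1 f2)"
    if "f1 < 0" "0 < f2" for f1 f2
  proof -
    define k where "k = f2 - f1"
    define t where "t = - f1 / k"
    have k: "0 < k" using that unfolding k_def by simp
    have ft: "f1 = k * (-t)" "f2 = k * (1 - t)" using k unfolding t_def k_def by (auto simp: field_simps)
    have t: "0 < t" "t < 1" using that k unfolding t_def k_def by (auto simp: field_simps)
    define v where "v = max (HH Y P t) (HH Z Q t)"
    have v: "1 - 2*t \<le> v" "0 \<le> v" "v \<le> 1 - t"
      using H_bounds[OF EP, of t] H_bounds[OF EQ, of t] t unfolding v_def by auto
    obtain W S where ES: "is_experiment W S" and HS: "HH W S t = v"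
      and dom: "\<And>X R e1 e2. is_experiment X R \<Longrightarrow> HH X R t \<le> v \<Longrightarrow> GG X R e1 e2 \<le> GG W S e1 e2"
      using construct[OF t v] by blast
    have sc: "GG X R f1 f2 = k * HH X R t" for X R
      unfolding ft HH_def using G_scale[of k X R "-t" "1-t"] k by simp
    have "GG W S f1 f2 = max (GG Y P f1 f2) (GG Z Q f1 f2)"
      unfolding sc HS v_def using k by (simp add: max_mult_distrib_left)
    moreover have "HH Y P t \<le> v" "HH Z Q t \<le> v" unfolding v_def by auto
    ultimately show ?thesis using ES dom[OF EP] dom[OF EQ] by blast
  qed
  define W0 where "W0 = {0,1::nat}"
  define F :: "2 \<Rightarrow> nat \<Rightarrow> real" where "F \<theta> y = (if \<theta> = 1 then (if y = 0 then 1 else 0) else (if y = 1 then 1 else 0))" for \<theta> y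
  have EF: "is_experiment W0 F"
    unfolding is_experiment_def is_dist_def W0_def F_def by auto
  have GF: "GG W0 F e1 e2 = max 0 e1 + max 0 e2" for e1 e2
    unfolding GG_def W0_def F_def by simp
  have domF: "\<forall>e1 e2. GG X R e1 e2 \<le> GG W0 F e1 e2" if "is_experiment X R" for X R
    using G_upper[OF that] GF by simp
  consider "0 \<le> d1" "0 \<le> d2" | "d1 \<le> 0" "d2 \<le> 0" | "d1 < 0" "0 < d2" | "0 < d1" "d2 < 0" by linarith
  then show ?thesis
  proof cases
    case 1
    then have "GG W0 F d1 d2 \<le> max (GG Y P d1 d2) (GG Z Q d1 d2)"
      using GF G_lower[OF EP, of d1 d2] by simp
    then show ?thesis using EF domF[OF EP] domF[OF EQ] by blast
  next
    case 2
    then have "GG W0 F d1 d2 \<le> max (GG Y P d1 d2) (GG Z Q d1 d2)"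
      using GF G_lower[OF EP, of d1 d2] by simp
    then show ?thesis using EF domF[OF EP] domF[OF EQ] by blast
  next
    case 3
    then show ?thesis using mixed[of d1 d2] by force
  next
    case 4
    then obtain W S where ES: "is_experiment W S" and d: "\<forall>e1 e2. GG Y P e1 e2 \<le> GG W S e1 e2"
      "\<forall>e1 e2. GG Z Q e1 e2 \<le> GG W S e1 e2" and eq: "GG W S (-d1) (-d2) = max (GG Y P (-d1) (-d2)) (GG Z Q (-d1) (-d2))"
      using mixed[of "-d1" "-d2"] by auto
    have "GG W S d1 d2 = max (GG Y P d1 d2) (GG Z Q d1 d2)"
      using eq G_neg[OF ES, of d1 d2] G_neg[OF EP, of d1 d2] G_neg[OF EQ, of d1 d2] by simp
    then have "GG W S d1 d2 \<le> max (GG Y P d1 d2) (GG Z Q d1 d2)" by simp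
    then show ?thesis using ES d by blast
  qed
qed

lemma sup_iff:
  assumes EP: "is_experiment YP P" and EQ: "is_experiment YQ Q" and ER: "is_experiment YR R"
  shows "blackwell_sup YR R [(YP,P),(YQ,Q)] \<longleftrightarrow>
     (\<forall>e1 e2. GG YR R e1 e2 = max (GG YP P e1 e2) (GG YQ Q e1 e2))"
proof
  assume B: "blackwell_sup YR R [(YP,P),(YQ,Q)]"
  then have "more_informative YR R YP P" "more_informative YR R YQ Q"
    unfolding blackwell_sup_def by auto
  then have ge: "GG YP P e1 e2 \<le> GG YR R e1 e2" "GG YQ Q e1 e2 \<le> GG YR R e1 e2" for e1 e2
    using mi_iff[OF ER EP] mi_iff[OF ER EQ] by auto
  show "\<forall>e1 e2. GG YR R e1 e2 = max (GG YP P e1 e2) (GG YQ Q e1 e2)"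
  proof (intro allI)
    fix d1 d2
    obtain W S where ES: "is_experiment W S" and d: "\<forall>e1 e2. GG YP P e1 e2 \<le> GG W S e1 e2"
      "\<forall>e1 e2. GG YQ Q e1 e2 \<le> GG W S e1 e2" and le: "GG W S d1 d2 \<le> max (GG YP P d1 d2) (GG YQ Q d1 d2)"
      using witness[OF EP EQ, of d1 d2] by blast
    have "more_informative W S YP P" "more_informative W S YQ Q"
      using mi_iff[OF ES EP] mi_iff[OF ES EQ] d by auto
    then have "more_informative W S YR R" using B ES unfolding blackwell_sup_def by auto
    then have "GG YR R d1 d2 \<le> GG W S d1 d2" using mi_iff[OF ES ER] by auto
    then show "GG YR R d1 d2 = max (GG YP P d1 d2) (GG YQ Q d1 d2)"
      using le ge[of d1 d2] by linarith
  qed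
next
  assume M: "\<forall>e1 e2. GG YR R e1 e2 = max (GG YP P e1 e2) (GG YQ Q e1 e2)"
  have "more_informative YR R YP P" "more_informative YR R YQ Q"
    using mi_iff[OF ER EP] mi_iff[OF ER EQ] M by auto
  moreover have "more_informative W S YR R"
    if "is_experiment W S" "more_informative W S YP P" "more_informative W S YQ Q" for W S
    using mi_iff[OF that(1) ER] mi_iff[OF that(1) EP] mi_iff[OF that(1) EQ] that(2,3) M by auto
  ultimately show "blackwell_sup YR R [(YP,P),(YQ,Q)]"
    unfolding blackwell_sup_def by auto
qed



definition lam :: "nat set \<Rightarrow> (2 \<Rightarrow> nat \<Rightarrow> real) \<Rightarrow> (nat \<Rightarrow> 'a::finite \<Rightarrow> real) \<Rightarrow> real^(2 \<times> 'a)" where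
  "lam Y P \<sigma> = (\<chi> i. \<Sum>y\<in>Y. \<sigma> y (snd i) * P (fst i) y)"

lemma feasible_lam: "feasible Y P = {lam Y P \<sigma> | \<sigma>. strategy Y UNIV \<sigma>}"
  unfolding feasible_def lam_def by simp

lemma sum_a:
  fixes g :: "'a::finite \<Rightarrow> real"
  assumes U: "a0 \<noteq> a1" "(UNIV::'a set) = {a0,a1}"
  shows "(\<Sum>a\<in>UNIV. g a) = g a0 + g a1"
  unfolding U(2) using U(1) by simp

lemma sum_pair:
  fixes g :: "2 \<times> 'a::finite \<Rightarrow> real"
  assumes U: "a0 \<noteq> a1" "(UNIV::'a set) = {a0,a1}"
  shows "(\<Sum>i\<in>UNIV. g i) = g (1,a0) + g (1,a1) + g (2,a0) + g (2,a1)"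
proof -
  have "(\<Sum>i\<in>UNIV. g i) = (\<Sum>i\<in>(UNIV::2 set) \<times> (UNIV::'a set). g i)" by (simp add: UNIV_Times_UNIV)
  also have "\<dots> = (\<Sum>\<theta>\<in>UNIV. \<Sum>a\<in>UNIV. g (\<theta>, a))" by (rule sum.cartesian_product')
  finally show ?thesis unfolding sum_2 sum_a[OF U] by simp
qed

lemma strat_ab:
  assumes U: "a0 \<noteq> a1" "(UNIV::'a::finite set) = {a0,a1}"
    and s: "strategy Y (UNIV::'a set) \<sigma>" and y: "y \<in> Y"
  shows "\<sigma> y a0 + \<sigma> y a1 = 1" "0 \<le> \<sigma> y a0" "0 \<le> \<sigma> y a1"
  using s y sum_a[OF U, of "\<sigma> y"] unfolding strategy_def is_dist_def by auto

lemma lin_sum: "is_experiment Y P \<Longrightarrow> (\<Sum>y\<in>Y. c1 * P 1 y + c2 * P 2 y) = c1 + c2"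
  by (simp add: sum.distrib sum_distrib_left[symmetric] exp_sum)

lemma hfun_eq:
  assumes E: "is_experiment Y P"
  shows "(\<Sum>y\<in>Y. (z$(1,a1) * P 1 y + z$(2,a1) * P 2 y) + max 0 ((z$(1,a0) * P 1 y + z$(2,a0) * P 2 y) - (z$(1,a1) * P 1 y + z$(2,a1) * P 2 y)))
     = z$(1,a1) + z$(2,a1) + GG Y P (z$(1,a0) - z$(1,a1)) (z$(2,a0) - z$(2,a1))"
proof -
  have "(\<Sum>y\<in>Y. (z$(1,a1) * P 1 y + z$(2,a1) * P 2 y) + max 0 ((z$(1,a0) * P 1 y + z$(2,a0) * P 2 y) - (z$(1,a1) * P 1 y + z$(2,a1) * P 2 y)))
    = (\<Sum>y\<in>Y. z$(1,a1) * P 1 y + z$(2,a1) * P 2 y) + GG Y P (z$(1,a0) - z$(1,a1)) (z$(2,a0) - z$(2,a1))"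
    unfolding GG_def sum.distrib[symmetric] by (intro sum.cong refl) (simp add: algebra_simps)
  then show ?thesis using lin_sum[OF E] by simp
qed

definition hfun :: "nat set \<Rightarrow> (2 \<Rightarrow> nat \<Rightarrow> real) \<Rightarrow> 'a \<Rightarrow> 'a \<Rightarrow> real^(2 \<times> 'a::finite) \<Rightarrow> real" where
  "hfun Y P a0 a1 z = z$(1,a1) + z$(2,a1) + GG Y P (z$(1,a0) - z$(1,a1)) (z$(2,a0) - z$(2,a1))"

lemma inner_lam:
  assumes U: "a0 \<noteq> a1" "(UNIV::'a::finite set) = {a0,a1}" and E: "is_experiment Y P"
  shows "z \<bullet> lam Y P (\<sigma>::nat \<Rightarrow> 'a \<Rightarrow> real) = (\<Sum>y\<in>Y. \<sigma> y a0 * (z$(1,a0) * P 1 y + z$(2,a0) * P 2 y)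
                      + \<sigma> y a1 * (z$(1,a1) * P 1 y + z$(2,a1) * P 2 y))"
proof -
  have "z \<bullet> lam Y P \<sigma> = z$(1,a0) * (\<Sum>y\<in>Y. \<sigma> y a0 * P 1 y) + z$(1,a1) * (\<Sum>y\<in>Y. \<sigma> y a1 * P 1 y)
     + z$(2,a0) * (\<Sum>y\<in>Y. \<sigma> y a0 * P 2 y) + z$(2,a1) * (\<Sum>y\<in>Y. \<sigma> y a1 * P 2 y)"
    unfolding inner_vec_def lam_def sum_pair[OF U] by simp
  also have "\<dots> = (\<Sum>y\<in>Y. z$(1,a0) * (\<sigma> y a0 * P 1 y) + z$(1,a1) * (\<sigma> y a1 * P 1 y)
     + z$(2,a0) * (\<sigma> y a0 * P 2 y) + z$(2,a1) * (\<sigma> y a1 * P 2 y))"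
    by (simp only: sum.distrib sum_distrib_left)
  also have "\<dots> = (\<Sum>y\<in>Y. \<sigma> y a0 * (z$(1,a0) * P 1 y + z$(2,a0) * P 2 y)
                      + \<sigma> y a1 * (z$(1,a1) * P 1 y + z$(2,a1) * P 2 y))"
    by (intro sum.cong refl) (simp add: algebra_simps)
  finally show ?thesis .
qed

lemma supp_le:
  assumes U: "a0 \<noteq> a1" "(UNIV::'a::finite set) = {a0,a1}" and E: "is_experiment Y P"
    and x: "x \<in> (feasible Y P :: (real^(2\<times>'a)) set)"
  shows "z \<bullet> x \<le> hfun Y P a0 a1 z"
proof -
  obtain \<sigma> where s: "strategy Y (UNIV::'a set) \<sigma>" and xs: "x = lam Y P \<sigma>"
    using x unfolding feasible_lam by auto
  define w0 where "w0 y = z$(1,a0) * P 1 y + z$(2,a0) * P 2 y" for y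
  define w1 where "w1 y = z$(1,a1) * P 1 y + z$(2,a1) * P 2 y" for y
  have "z \<bullet> x = (\<Sum>y\<in>Y. \<sigma> y a0 * w0 y + \<sigma> y a1 * w1 y)"
    unfolding xs inner_lam[OF U E] w0_def w1_def ..
  also have "\<dots> \<le> (\<Sum>y\<in>Y. w1 y + max 0 (w0 y - w1 y))"
  proof (intro sum_mono)
    fix y assume y: "y \<in> Y"
    note ab = strat_ab[OF U s y]
    have "\<sigma> y a0 * w0 y + \<sigma> y a1 * w1 y = w1 y + \<sigma> y a0 * (w0 y - w1 y)"
    proof -
      have e: "\<sigma> y a1 = 1 - \<sigma> y a0" using ab(1) by simp
      show ?thesis unfolding e by (simp add: algebra_simps)
    qed
    also have "\<sigma> y a0 * (w0 y - w1 y) \<le> max 0 (w0 y - w1 y)"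
    proof (cases "0 \<le> w0 y - w1 y")
      case True
      have "\<sigma> y a0 \<le> 1" using ab by simp
      then have "\<sigma> y a0 * (w0 y - w1 y) \<le> 1 * (w0 y - w1 y)" using True by (intro mult_right_mono)
      then show ?thesis by simp
    next
      case False
      then show ?thesis using ab(2) by (simp add: mult_nonneg_nonpos)
    qed
    finally show "\<sigma> y a0 * w0 y + \<sigma> y a1 * w1 y \<le> w1 y + max 0 (w0 y - w1 y)" by simp
  qed
  also have "\<dots> = hfun Y P a0 a1 z"
    unfolding hfun_def w0_def w1_def by (rule hfun_eq[OF E])
  finally show ?thesis .
qed

lemma supp_att:
  assumes U: "a0 \<noteq> a1" "(UNIV::'a::finite set) = {a0,a1}" and E: "is_experiment Y P"
  shows "\<exists>x \<in> (feasible Y P :: (real^(2\<times>'a)) set). z \<bullet> x = hfun Y P a0 a1 z"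
proof -
  define w0 where "w0 y = z$(1,a0) * P 1 y + z$(2,a0) * P 2 y" for y
  define w1 where "w1 y = z$(1,a1) * P 1 y + z$(2,a1) * P 2 y" for y
  define \<sigma> :: "nat \<Rightarrow> 'a \<Rightarrow> real" where
    "\<sigma> y a = (if a = a0 then (if w1 y \<le> w0 y then 1 else 0) else (if w1 y \<le> w0 y then 0 else 1))" for y a
  have ne: "a1 \<noteq> a0" using U(1) by simp
  have s: "strategy Y (UNIV::'a set) \<sigma>"
    unfolding strategy_def is_dist_def sum_a[OF U]
  proof (intro ballI conjI allI)
    fix y a show "0 \<le> \<sigma> y a" unfolding \<sigma>_def by simp
    show "\<sigma> y a0 + \<sigma> y a1 = 1" unfolding \<sigma>_def using ne by simp
  qed
  have "z \<bullet> lam Y P \<sigma> = (\<Sum>y\<in>Y. \<sigma> y a0 * w0 y + \<sigma> y a1 * w1 y)"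
    unfolding inner_lam[OF U E] w0_def w1_def ..
  also have "\<dots> = (\<Sum>y\<in>Y. w1 y + max 0 (w0 y - w1 y))"
  proof (intro sum.cong refl)
    fix y
    show "\<sigma> y a0 * w0 y + \<sigma> y a1 * w1 y = w1 y + max 0 (w0 y - w1 y)"
      unfolding \<sigma>_def using ne by (cases "w1 y \<le> w0 y") auto
  qed
  also have "\<dots> = hfun Y P a0 a1 z"
    unfolding hfun_def w0_def w1_def by (rule hfun_eq[OF E])
  finally show ?thesis using s unfolding feasible_lam by blast
qed



lemma feas_convex: "convex (feasible Y P :: (real^(2\<times>'a::finite)) set)"
  unfolding convex_def feasible_lam
proof (intro ballI allI impI)
  fix x x' :: "real^(2\<times>'a)" and u v :: real
  assume x: "x \<in> {lam Y P \<sigma> |\<sigma>. strategy Y UNIV \<sigma>}" and x': "x' \<in> {lam Y P \<sigma> |\<sigma>. strategy Y UNIV \<sigma>}"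
    and uv: "0 \<le> u" "0 \<le> v" "u + v = 1"
  obtain \<sigma> where s: "strategy Y (UNIV::'a set) \<sigma>" "x = lam Y P \<sigma>" using x by auto
  obtain \<sigma>' where s': "strategy Y (UNIV::'a set) \<sigma>'" "x' = lam Y P \<sigma>'" using x' by auto
  define \<tau> where "\<tau> y a = u * \<sigma> y a + v * \<sigma>' y a" for y a
  have "strategy Y (UNIV::'a set) \<tau>"
    unfolding strategy_def is_dist_def
  proof (rule ballI)
    fix y assume y: "y \<in> Y"
    have d: "\<forall>a. 0 \<le> \<sigma> y a" "sum (\<sigma> y) UNIV = 1" "\<forall>a. 0 \<le> \<sigma>' y a" "sum (\<sigma>' y) UNIV = 1"
      using s(1) s'(1) y unfolding strategy_def is_dist_def by auto
    have "\<forall>a\<in>UNIV. 0 \<le> \<tau> y a" using d uv unfolding \<tau>_def by simp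
    moreover have "sum (\<tau> y) UNIV = 1" using d uv unfolding \<tau>_def
      by (simp add: sum.distrib sum_distrib_left[symmetric])
    ultimately show "(\<forall>a\<in>UNIV. 0 \<le> \<tau> y a) \<and> sum (\<tau> y) UNIV = 1" by simp
  qed
  moreover have "u *\<^sub>R x + v *\<^sub>R x' = lam Y P \<tau>"
    unfolding s(2) s'(2) lam_def vec_eq_iff
    by (simp add: \<tau>_def sum_distrib_left sum.distrib[symmetric] algebra_simps)
  ultimately show "u *\<^sub>R x + v *\<^sub>R x' \<in> {lam Y P \<sigma> |\<sigma>. strategy Y UNIV \<sigma>}" by blast
qed

definition simplex_v :: "(real^'a::finite) set" where
  "simplex_v = {v. (\<forall>a. 0 \<le> v$a) \<and> (\<chi> a. 1) \<bullet> v = 1}"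

lemma simplex_compact: "compact (simplex_v :: (real^'a::finite) set)"
proof -
  have eq: "simplex_v = (\<Inter>a. {v::real^'a. 0 \<le> v$a}) \<inter> {v. (\<chi> a. 1) \<bullet> v = 1}"
    unfolding simplex_v_def by auto
  have cl: "closed (simplex_v :: (real^'a) set)"
    unfolding eq by (intro closed_Int closed_INT closed_hyperplane ballI closed_halfspace_component_ge_cart)
  have "simplex_v \<subseteq> cbox (0::real^'a) (\<chi> a. 1)"
  proof
    fix v :: "real^'a" assume v: "v \<in> simplex_v"
    then have nn: "\<forall>a. 0 \<le> v$a" and s: "(\<Sum>a\<in>UNIV. v$a) = 1"
      unfolding simplex_v_def inner_vec_def by auto
    have "v$a \<le> 1" for a
      using member_le_sum[of a UNIV "\<lambda>a. v$a"] nn s by simp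
    then show "v \<in> cbox 0 (\<chi> a. 1)" using nn by (simp add: mem_box_cart)
  qed
  then have "bounded (simplex_v :: (real^'a) set)" by (rule bounded_subset[OF bounded_cbox])
  then show ?thesis using cl by (simp add: compact_eq_bounded_closed)
qed

lemma Ly_compact:
  "compact {(\<chi> i. q (snd i) * P (fst i) y) :: real^(2\<times>'a::finite) | q. is_dist (UNIV::'a set) q}"
proof -
  have eq: "{(\<chi> i. q (snd i) * P (fst i) y) :: real^(2\<times>'a) | q. is_dist (UNIV::'a set) q}
     = (\<lambda>v. \<chi> i. v $ snd i * P (fst i) y) ` simplex_v"
  proof (intro set_eqI iffI)
    fix x :: "real^(2\<times>'a)"
    assume "x \<in> {(\<chi> i. q (snd i) * P (fst i) y) | q. is_dist (UNIV::'a set) q}"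
    then obtain q where q: "is_dist (UNIV::'a set) q" "x = (\<chi> i. q (snd i) * P (fst i) y)" by auto
    have "(\<chi> a. q a) \<in> (simplex_v :: (real^'a) set)"
      using q(1) unfolding simplex_v_def is_dist_def inner_vec_def by simp
    moreover have "x = (\<lambda>v. \<chi> i. v $ snd i * P (fst i) y) (\<chi> a. q a)" using q(2) by simp
    ultimately show "x \<in> (\<lambda>v. \<chi> i. v $ snd i * P (fst i) y) ` simplex_v" by blast
  next
    fix x :: "real^(2\<times>'a)"
    assume "x \<in> (\<lambda>v. \<chi> i. v $ snd i * P (fst i) y) ` simplex_v"
    then obtain v where v: "v \<in> simplex_v" "x = (\<chi> i. v $ snd i * P (fst i) y)" by auto
    have "is_dist (UNIV::'a set) (\<lambda>a. v$a)" using v(1) unfolding simplex_v_def is_dist_def inner_vec_def by simp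
    then show "x \<in> {(\<chi> i. q (snd i) * P (fst i) y) | q. is_dist (UNIV::'a set) q}" using v(2) by blast
  qed
  show ?thesis unfolding eq
    by (intro compact_continuous_image simplex_compact continuous_on_vec_lambda continuous_intros)
qed

lemma feas_compact:
  assumes "finite Y"
  shows "compact (feasible Y P :: (real^(2\<times>'a::finite)) set)"
  using assms
proof (induction Y rule: finite_induct)
  case empty
  have "feasible {} P = {0 :: real^(2\<times>'a)}"
    unfolding feasible_lam lam_def by (auto simp: strategy_def vec_eq_iff)
  then show ?case by simp
next
  case (insert y Y)
  define L where "L = {(\<chi> i. q (snd i) * P (fst i) y) :: real^(2\<times>'a) | q. is_dist (UNIV::'a set) q}"
  have "feasible (insert y Y) P = {a + b | a b. a \<in> L \<and> b \<in> (feasible Y P :: (real^(2\<times>'a)) set)}"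
  proof (intro set_eqI iffI)
    fix x assume "x \<in> (feasible (insert y Y) P :: (real^(2\<times>'a)) set)"
    then obtain \<sigma> where s: "strategy (insert y Y) (UNIV::'a set) \<sigma>" "x = lam (insert y Y) P \<sigma>"
      unfolding feasible_lam by auto
    have "(\<chi> i. \<sigma> y (snd i) * P (fst i) y) \<in> L" using s(1) unfolding L_def strategy_def by auto
    moreover have "lam Y P \<sigma> \<in> (feasible Y P :: (real^(2\<times>'a)) set)"
      using s(1) unfolding feasible_lam strategy_def by auto
    moreover have "x = (\<chi> i. \<sigma> y (snd i) * P (fst i) y) + lam Y P \<sigma>"
      unfolding s(2) lam_def vec_eq_iff using insert.hyps by simp
    ultimately show "x \<in> {a + b | a b. a \<in> L \<and> b \<in> (feasible Y P :: (real^(2\<times>'a)) set)}" by blast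
  next
    fix x assume "x \<in> {a + b | a b. a \<in> L \<and> b \<in> (feasible Y P :: (real^(2\<times>'a)) set)}"
    then obtain q \<sigma> where q: "is_dist (UNIV::'a set) q" and s: "strategy Y (UNIV::'a set) \<sigma>"
      and x: "x = (\<chi> i. q (snd i) * P (fst i) y) + lam Y P \<sigma>"
      unfolding L_def feasible_lam by auto
    define \<sigma>' where "\<sigma>' = \<sigma>(y := q)"
    have "strategy (insert y Y) (UNIV::'a set) \<sigma>'"
      using s q unfolding strategy_def \<sigma>'_def by auto
    moreover have "x = lam (insert y Y) P \<sigma>'"
    proof -
      have "(\<Sum>z\<in>Y. \<sigma>' z a * P t z) = (\<Sum>z\<in>Y. \<sigma> z a * P t z)" for a t
        using insert.hyps unfolding \<sigma>'_def by (intro sum.cong) auto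
      then show ?thesis unfolding x lam_def vec_eq_iff using insert.hyps by (simp add: \<sigma>'_def)
    qed
    ultimately show "x \<in> (feasible (insert y Y) P :: (real^(2\<times>'a)) set)" unfolding feasible_lam by blast
  qed
  moreover have "compact L" unfolding L_def by (rule Ly_compact)
  ultimately show ?case using insert.IH by (simp add: compact_sums)
qed



lemma supp_sub:
  fixes K1 K2 :: "('n::euclidean_space) set"
  assumes "closed K2" "convex K2" and H: "\<And>x z. x \<in> K1 \<Longrightarrow> \<exists>y\<in>K2. z \<bullet> x \<le> z \<bullet> y"
  shows "K1 \<subseteq> K2"
proof
  fix x assume x: "x \<in> K1"
  show "x \<in> K2"
  proof (rule ccontr)
    assume "x \<notin> K2"
    then obtain a b where ab: "a \<bullet> x < b" "\<forall>y\<in>K2. b < a \<bullet> y"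
      using separating_hyperplane_closed_point[OF assms(2,1)] by blast
    obtain y where y: "y \<in> K2" "(-a) \<bullet> x \<le> (-a) \<bullet> y" using H[OF x, of "-a"] by blast
    then show False using ab by auto
  qed
qed

lemma hfun_d:
  assumes U: "a0 \<noteq> a1"
  shows "hfun Y P a0 a1 ((\<chi> i. if snd i = a0 then (if fst i = 1 then d1 else d2) else 0) :: real^(2\<times>'a::finite))
      = GG Y P d1 d2"
  unfolding hfun_def using U by simp

lemma feas_iff:
  fixes a0 a1 :: "'a::finite"
  assumes U: "a0 \<noteq> a1" "(UNIV::'a set) = {a0,a1}"
    and EP: "is_experiment YP P" and EQ: "is_experiment YQ Q" and ER: "is_experiment YR R"
  shows "(feasible YR R :: (real^(2 \<times> 'a)) set) = convex hull (feasible YP P \<union> feasible YQ Q)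
     \<longleftrightarrow> (\<forall>e1 e2. GG YR R e1 e2 = max (GG YP P e1 e2) (GG YQ Q e1 e2))"
proof -
  define FP where "FP = (feasible YP P :: (real^(2 \<times> 'a)) set)"
  define FQ where "FQ = (feasible YQ Q :: (real^(2 \<times> 'a)) set)"
  define FR where "FR = (feasible YR R :: (real^(2 \<times> 'a)) set)"
  define K where "K = convex hull (FP \<union> FQ)"
  have cK: "closed K" unfolding K_def FP_def FQ_def
    by (intro compact_imp_closed compact_convex_hull compact_Un feas_compact exp_fin[OF EP] exp_fin[OF EQ])
  have vK: "convex K" unfolding K_def by simp
  have cR: "closed FR" unfolding FR_def by (intro compact_imp_closed feas_compact exp_fin[OF ER])
  have vR: "convex FR" unfolding FR_def by (rule feas_convex)
  have PK: "FP \<subseteq> K" "FQ \<subseteq> K" unfolding K_def by (auto intro: hull_inc)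
  note leP = supp_le[OF U EP, folded FP_def] and leQ = supp_le[OF U EQ, folded FQ_def]
    and leR = supp_le[OF U ER, folded FR_def]
  note atP = supp_att[OF U EP, folded FP_def] and atQ = supp_att[OF U EQ, folded FQ_def]
    and atR = supp_att[OF U ER, folded FR_def]
  have Kle: "z \<bullet> x \<le> max (hfun YP P a0 a1 z) (hfun YQ Q a0 a1 z)" if "x \<in> K" for x z
  proof -
    have "K \<subseteq> {x. z \<bullet> x \<le> max (hfun YP P a0 a1 z) (hfun YQ Q a0 a1 z)}"
    proof -
      have "FP \<union> FQ \<subseteq> {x. z \<bullet> x \<le> max (hfun YP P a0 a1 z) (hfun YQ Q a0 a1 z)}"
      proof
        fix x assume "x \<in> FP \<union> FQ"
        then show "x \<in> {x. z \<bullet> x \<le> max (hfun YP P a0 a1 z) (hfun YQ Q a0 a1 z)}"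
          using leP[of x z] leQ[of x z] by (auto simp: max_def)
      qed
      then show ?thesis unfolding K_def by (intro hull_minimal convex_halfspace_le)
    qed
    then show ?thesis using that by auto
  qed
  have "FR = K \<longleftrightarrow> (\<forall>e1 e2. GG YR R e1 e2 = max (GG YP P e1 e2) (GG YQ Q e1 e2))"
  proof
    assume eq: "FR = K"
    show "\<forall>e1 e2. GG YR R e1 e2 = max (GG YP P e1 e2) (GG YQ Q e1 e2)"
    proof (intro allI)
      fix d1 d2
      define z where "z = ((\<chi> i. if snd i = a0 then (if fst i = 1 then d1 else d2) else 0) :: real^(2\<times>'a))"
      have h: "hfun Y X a0 a1 z = GG Y X d1 d2" for Y X unfolding z_def by (rule hfun_d[OF U(1)])
      obtain xR where xR: "xR \<in> FR" "z \<bullet> xR = hfun YR R a0 a1 z" using atR by blast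
      have 1: "GG YR R d1 d2 \<le> max (GG YP P d1 d2) (GG YQ Q d1 d2)"
        using Kle[of xR z] xR eq h by simp
      obtain xP where xP: "xP \<in> FP" "z \<bullet> xP = hfun YP P a0 a1 z" using atP by blast
      obtain xQ where xQ: "xQ \<in> FQ" "z \<bullet> xQ = hfun YQ Q a0 a1 z" using atQ by blast
      have "GG YP P d1 d2 \<le> GG YR R d1 d2" using leR[of xP z] xP PK eq h by auto
      moreover have "GG YQ Q d1 d2 \<le> GG YR R d1 d2" using leR[of xQ z] xQ PK eq h by auto
      ultimately show "GG YR R d1 d2 = max (GG YP P d1 d2) (GG YQ Q d1 d2)" using 1 by simp
    qed
  next
    assume M: "\<forall>e1 e2. GG YR R e1 e2 = max (GG YP P e1 e2) (GG YQ Q e1 e2)"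
    have hM: "hfun YR R a0 a1 z = max (hfun YP P a0 a1 z) (hfun YQ Q a0 a1 z)" for z
      unfolding hfun_def using M by (simp add: max_def)
    have "FR \<subseteq> K"
    proof (rule supp_sub[OF cK vK])
      fix x z assume x: "x \<in> FR"
      obtain xP where xP: "xP \<in> FP" "z \<bullet> xP = hfun YP P a0 a1 z" using atP by blast
      obtain xQ where xQ: "xQ \<in> FQ" "z \<bullet> xQ = hfun YQ Q a0 a1 z" using atQ by blast
      have "z \<bullet> x \<le> max (z \<bullet> xP) (z \<bullet> xQ)" using leR[OF x, of z] hM xP xQ by simp
      then show "\<exists>y\<in>K. z \<bullet> x \<le> z \<bullet> y" using xP xQ PK by (metis max_def subsetD)
    qed
    moreover have "K \<subseteq> FR"
    proof -
      have "FP \<subseteq> FR"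
      proof (rule supp_sub[OF cR vR])
        fix x z assume x: "x \<in> FP"
        obtain xR where xR: "xR \<in> FR" "z \<bullet> xR = hfun YR R a0 a1 z" using atR by blast
        show "\<exists>y\<in>FR. z \<bullet> x \<le> z \<bullet> y" using leP[OF x, of z] hM[of z] xR by (intro bexI[OF _ xR(1)]) simp
      qed
      moreover have "FQ \<subseteq> FR"
      proof (rule supp_sub[OF cR vR])
        fix x z assume x: "x \<in> FQ"
        obtain xR where xR: "xR \<in> FR" "z \<bullet> xR = hfun YR R a0 a1 z" using atR by blast
        show "\<exists>y\<in>FR. z \<bullet> x \<le> z \<bullet> y" using leQ[OF x, of z] hM[of z] xR by (intro bexI[OF _ xR(1)]) simp
      qed
      ultimately show ?thesis unfolding K_def using vR by (intro hull_minimal) auto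
    qed
    ultimately show "FR = K" by blast
  qed
  then show ?thesis unfolding FP_def FQ_def FR_def K_def .
qed

theorem lemma2:
  fixes YP YQ YR :: "nat set"
    and P Q R :: "2 \<Rightarrow> nat \<Rightarrow> real"
  assumes "CARD('a::finite) = 2"
    and "is_experiment YP P" and "is_experiment YQ Q" and "is_experiment YR R"
  shows "blackwell_sup YR R [(YP, P), (YQ, Q)] \<longleftrightarrow>
         (feasible YR R :: (real^(2 \<times> 'a)) set) =
           convex hull (feasible YP P \<union> feasible YQ Q)"
proof -
  obtain a0 a1 :: 'a where U: "(UNIV::'a set) = {a0,a1}" "a0 \<noteq> a1"
    using assms(1) card_2_iff[of "UNIV::'a set"] by auto
  show ?thesis
    using sup_iff[OF assms(2,3,4)] feas_iff[OF U(2) U(1) assms(2,3,4)] by simp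
qed

end
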